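(* For integers $n\geq m\geq 2$ with $n-m$ odd, the polynomial $K_q(n,m)$ is symmetric and unimodal: writing $K_q(n,m)=\sum_{i=0}^{D}c_iq^i$ with $D=m(n-m)+m$, one has $c_i=c_{D-i}$ for all $0\le i\le D$, and $c_0\le c_1\le\cdots\le c_{\lfloor D/2\rfloor}\ge c_{\lfloor D/2\rfloor+1}\ge\cdots\ge c_D$.
   Context: For integers $n\ge m\ge 0$ the Gaussian polynomial is ${n\brack m}=\prod_{i=0}^{m-1}\frac{1-q^{n-i}}{1-q^{m-i}}$. For $n\geq 1$ and $0\le m\le n$, the $q$-Kaplansky number is $K_q(n,m)=\frac{1-q^{n+m}}{1-q^{n}}{n\brack m}$, a polynomial in $q$ of degree $m(n-m)+m$. *)

theory Defs
  imports "HOL-Computational_Algebra.Polynomial"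
begin

definition one_minus_qpow :: "nat \<Rightarrow> rat poly" where
  "one_minus_qpow k = 1 - monom 1 k"

text \<open>Gaussian polynomial [n choose m]_q = prod_{i<m} (1-q^(n-i))/(1-q^(m-i)),
  written as an (exact) quotient of polynomials.\<close>
definition gauss_poly :: "nat \<Rightarrow> nat \<Rightarrow> rat poly" where
  "gauss_poly n m =
     (\<Prod>i<m. one_minus_qpow (n - i)) div (\<Prod>i<m. one_minus_qpow (m - i))"

definition q_kaplansky :: "nat \<Rightarrow> nat \<Rightarrow> rat poly" where
  "q_kaplansky n m = (one_minus_qpow (n + m) * gauss_poly n m) div one_minus_qpow n"

end

theory Submission
  imports Defs "HOL-Library.Poly_Mapping"
begin

type_synonym mon = "nat \<Rightarrow>\<^sub>0 nat"
type_synonym mp = "(nat \<Rightarrow>\<^sub>0 nat) \<Rightarrow>\<^sub>0 rat"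

abbreviation lk where "lk \<equiv> Poly_Mapping.lookup"
abbreviation ks where "ks \<equiv> Poly_Mapping.keys"

definition sc :: "rat \<Rightarrow> mp \<Rightarrow> mp" where
  "sc c p = Poly_Mapping.single 0 c * p"

definition X :: "mon \<Rightarrow> mp" where
  "X a = Poly_Mapping.single a 1"

lemma single0_mult: "Poly_Mapping.single 0 (a::rat) * Poly_Mapping.single 0 b = Poly_Mapping.single (0::mon) (a * b)"
  by (simp add: mult_single)

lemma vs: "vector_space sc"
  by unfold_locales (auto simp: sc_def algebra_simps single_add single0_mult[symmetric] mult.assoc)

interpretation V: vector_space sc by (rule vs)

lemma sc_mult_left: "sc c p * q = sc c (p * q)" by (simp add: sc_def mult.assoc)
lemma sc_mult_right: "p * sc c q = sc c (p * q)" by (simp add: sc_def mult.left_commute)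
lemma lookup_sc: "lk (sc c p) a = c * lk p a"
  by (simp add: sc_def mult_map_scale_conv_mult[symmetric] Poly_Mapping.map.rep_eq when_def)

lemma X_mult: "X a * X b = X (a + b)" by (simp add: X_def mult_single)
lemma lookup_X: "lk (X a) b = (if a = b then 1 else 0)" by (simp add: X_def lookup_single when_def)
lemma X_inj: "inj X"
proof (rule injI)
  fix a b assume "X a = X b"
  then have "lk (X a) a = lk (X b) a" by simp
  then show "a = b" by (simp add: lookup_X split: if_splits)
qed

lemma expand: "p = (\<Sum>a\<in>ks p. sc (lk p a) (X a))"
proof (rule poly_mapping_eqI)
  fix k
  have "lk (\<Sum>a\<in>ks p. sc (lk p a) (X a)) k = (\<Sum>a\<in>ks p. lk p a * (if a = k then 1 else 0))"
    by (simp add: lookup_sum lookup_sc lookup_X)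
  also have "\<dots> = (\<Sum>a\<in>ks p. if a = k then lk p a else 0)"
    by (rule sum.cong) auto
  also have "\<dots> = lk p k" by (cases "k \<in> ks p") (simp_all add: in_keys_iff sum.delta)
  finally show "lk p k = lk (\<Sum>a\<in>ks p. sc (lk p a) (X a)) k" by simp
qed

lemma span_X: "p \<in> V.span (range X)"
proof -
  have "(\<Sum>a\<in>ks p. sc (lk p a) (X a)) \<in> V.span (range X)"
    by (intro V.span_sum V.span_scale V.span_base rangeI)
  then show ?thesis using expand[of p] by simp
qed

lemma indep_X: "V.independent (X ` S)"
proof -
  { fix t u v assume t: "finite t" "t \<subseteq> X ` S" and s: "(\<Sum>v\<in>t. sc (u v) v) = 0" and v: "v \<in> t"
    then obtain a where a: "v = X a" by auto
    have "lk (\<Sum>v\<in>t. sc (u v) v) a = (\<Sum>w\<in>t. if w = v then u w else 0)"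
      unfolding lookup_sum lookup_sc
    proof (rule sum.cong[OF refl])
      fix w assume "w \<in> t"
      then obtain b where b: "w = X b" using t by auto
      show "u w * lk w a = (if w = v then u w else 0)"
        using a b X_inj by (auto simp: lookup_X inj_eq)
    qed
    also have "\<dots> = u v" using t v by (simp add: sum.delta')
    finally have "u v = 0" using s by simp }
  then show ?thesis unfolding V.dependent_explicit by blast
qed


interpretation VP: vector_space_pair sc sc by unfold_locales

abbreviation lin where "lin f \<equiv> Vector_Spaces.linear sc sc f"

lemma linI: "(\<And>x y. f (x + y) = f x + f y) \<Longrightarrow> (\<And>c x. f (sc c x) = sc c (f x)) \<Longrightarrow> lin f"
  by (simp add: Vector_Spaces.linear_iff vs)

lemma lin_add: "lin f \<Longrightarrow> f (x + y) = f x + f y" by (rule VP.linear_add)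
lemma lin_scale: "lin f \<Longrightarrow> f (sc c x) = sc c (f x)" by (rule VP.linear_scale)
lemma lin_diff: "lin f \<Longrightarrow> f (x - y) = f x - f y" by (rule VP.linear_diff)
lemma lin_0: "lin f \<Longrightarrow> f 0 = 0" by (rule VP.linear_0)
lemma lin_sum: "lin f \<Longrightarrow> f (sum g S) = (\<Sum>i\<in>S. f (g i))" by (rule VP.linear_sum)

lemma lin_eq: "lin f \<Longrightarrow> lin g \<Longrightarrow> (\<And>a. f (X a) = g (X a)) \<Longrightarrow> f p = g p"
  by (rule VP.linear_eq_on[OF _ _ span_X]) auto

lemma lin_mult_right: "lin (\<lambda>p. p * c)"
  by (rule linI) (simp_all add: distrib_right sc_mult_left)
lemma lin_mult_left: "lin (\<lambda>p. c * p)"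
  by (rule linI) (simp_all add: distrib_left sc_mult_right)

lemma X_mult': "X a * X b = X (b + a)" by (simp add: X_mult add.commute)

definition e :: "nat \<Rightarrow> mon" where "e i = Poly_Mapping.single i 1"

definition Dm :: "(nat \<Rightarrow> nat) \<Rightarrow> (nat \<Rightarrow> rat) \<Rightarrow> mon \<Rightarrow> mp" where
  "Dm \<sigma> w a = (\<Sum>i\<in>ks a. sc (of_nat (lk a i) * w i) (X (a - e i + e (\<sigma> i))))"

definition Der :: "(nat \<Rightarrow> nat) \<Rightarrow> (nat \<Rightarrow> rat) \<Rightarrow> mp \<Rightarrow> mp" where
  "Der \<sigma> w = VP.construct (range X) (\<lambda>p. Dm \<sigma> w (inv X p))"

lemma lin_Der: "lin (Der \<sigma> w)"
  unfolding Der_def by (rule VP.linear_construct) (simp add: indep_X)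

lemma Der_X: "Der \<sigma> w (X a) = Dm \<sigma> w a"
  unfolding Der_def by (subst VP.construct_basis) (simp_all add: indep_X X_inj)

lemma Dm_superset: "finite S \<Longrightarrow> ks a \<subseteq> S \<Longrightarrow>
   Dm \<sigma> w a = (\<Sum>i\<in>S. sc (of_nat (lk a i) * w i) (X (a - e i + e (\<sigma> i))))"
  unfolding Dm_def by (rule sum.mono_neutral_left) (auto simp: in_keys_iff)

lemma keys_add_nat: "ks (a + b :: mon) = ks a \<union> ks b"
  by (auto simp: in_keys_iff lookup_add)

lemma mon_shift: "lk a i \<noteq> 0 \<Longrightarrow> (a + b :: mon) - e i + e j = (a - e i + e j) + b"
  by (rule poly_mapping_eqI) (auto simp: lookup_add lookup_minus e_def lookup_single when_def)

lemma Dm_add: "Dm \<sigma> w (a + b) = Dm \<sigma> w a * X b + X a * Dm \<sigma> w b"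
proof -
  let ?S = "ks a \<union> ks b"
  have f: "finite ?S" by simp
  have "Dm \<sigma> w (a + b) = (\<Sum>i\<in>?S. sc (of_nat (lk (a+b) i) * w i) (X (a + b - e i + e (\<sigma> i))))"
    by (rule Dm_superset[OF f]) (simp add: keys_add_nat)
  also have "\<dots> = (\<Sum>i\<in>?S. sc (of_nat (lk a i) * w i) (X (a + b - e i + e (\<sigma> i))))
                + (\<Sum>i\<in>?S. sc (of_nat (lk b i) * w i) (X (b + a - e i + e (\<sigma> i))))"
    by (simp add: lookup_add algebra_simps sum.distrib V.scale_left_distrib add.commute)
  also have "(\<Sum>i\<in>?S. sc (of_nat (lk a i) * w i) (X (a + b - e i + e (\<sigma> i))))
      = (\<Sum>i\<in>?S. sc (of_nat (lk a i) * w i) (X (a - e i + e (\<sigma> i)))) * X b"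
    unfolding sum_distrib_right
    by (rule sum.cong[OF refl]) (case_tac "lk a x = 0", simp_all add: sc_mult_left X_mult mon_shift)
  also have "(\<Sum>i\<in>?S. sc (of_nat (lk b i) * w i) (X (b + a - e i + e (\<sigma> i))))
      = X a * (\<Sum>i\<in>?S. sc (of_nat (lk b i) * w i) (X (b - e i + e (\<sigma> i))))"
    unfolding sum_distrib_left
    by (rule sum.cong[OF refl]) (case_tac "lk b x = 0", simp_all add: sc_mult_right X_mult' mon_shift)
  finally show ?thesis
    using Dm_superset[OF f, of a] Dm_superset[OF f, of b] by simp
qed

lemma Der_mult: "Der \<sigma> w (p * q) = Der \<sigma> w p * q + p * Der \<sigma> w q"
proof -
  have L: "lin (Der \<sigma> w)" by (rule lin_Der)
  have 1: "Der \<sigma> w (p * X b) = Der \<sigma> w p * X b + p * Der \<sigma> w (X b)" for p b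
  proof (rule lin_eq[where f="\<lambda>p. Der \<sigma> w (p * X b)"])
    show "lin (\<lambda>p. Der \<sigma> w (p * X b))"
      by (rule linI) (simp_all add: distrib_right sc_mult_left lin_add[OF L] lin_scale[OF L])
    show "lin (\<lambda>p. Der \<sigma> w p * X b + p * Der \<sigma> w (X b))"
      by (rule linI) (simp_all add: distrib_right sc_mult_left lin_add[OF L] lin_scale[OF L] V.scale_right_distrib)
    fix a show "Der \<sigma> w (X a * X b) = Der \<sigma> w (X a) * X b + X a * Der \<sigma> w (X b)"
      by (simp add: X_mult Der_X Dm_add)
  qed
  show ?thesis
  proof (rule lin_eq[where f="\<lambda>q. Der \<sigma> w (p * q)"])
    show "lin (\<lambda>q. Der \<sigma> w (p * q))"
      by (rule linI) (simp_all add: distrib_left sc_mult_right lin_add[OF L] lin_scale[OF L])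
    show "lin (\<lambda>q. Der \<sigma> w p * q + p * Der \<sigma> w q)"
      by (rule linI) (simp_all add: distrib_left sc_mult_right lin_add[OF L] lin_scale[OF L] V.scale_right_distrib)
    fix b show "Der \<sigma> w (p * X b) = Der \<sigma> w p * X b + p * Der \<sigma> w (X b)" by (rule 1)
  qed
qed


lemma sum_keys_superset: "finite S \<Longrightarrow> ks a \<subseteq> S \<Longrightarrow> (\<And>i. g i 0 = 0) \<Longrightarrow>
   (\<Sum>i\<in>ks a. g i (lk a i)) = (\<Sum>i\<in>S. g i (lk a i))"
  by (rule sum.mono_neutral_left) (auto simp: in_keys_iff)

definition deg :: "mon \<Rightarrow> nat" where "deg a = (\<Sum>i\<in>ks a. lk a i)"
definition wt :: "mon \<Rightarrow> nat" where "wt a = (\<Sum>i\<in>ks a. i * lk a i)"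
definition ws :: "(nat \<Rightarrow> rat) \<Rightarrow> mon \<Rightarrow> rat" where "ws \<omega> a = (\<Sum>i\<in>ks a. of_nat (lk a i) * \<omega> i)"

lemma keys_e[simp]: "ks (e i) = {i}" by (simp add: e_def)
lemma lookup_e: "lk (e i) j = (if i = j then 1 else 0)" by (simp add: e_def lookup_single)

lemma ws_add: "ws \<omega> (a + b) = ws \<omega> a + ws \<omega> b"
proof -
  let ?S = "ks a \<union> ks b"
  have "ws \<omega> (a+b) = (\<Sum>i\<in>?S. of_nat (lk (a+b) i) * \<omega> i)"
    unfolding ws_def by (rule sum_keys_superset[where g="\<lambda>i x. of_nat x * \<omega> i"]) (auto simp: keys_add_nat)
  also have "\<dots> = (\<Sum>i\<in>?S. of_nat (lk a i) * \<omega> i) + (\<Sum>i\<in>?S. of_nat (lk b i) * \<omega> i)"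
    by (simp add: lookup_add algebra_simps sum.distrib)
  also have "\<dots> = ws \<omega> a + ws \<omega> b"
    unfolding ws_def
    by (subst (1 2) sum_keys_superset[where g="\<lambda>i x. of_nat x * \<omega> i" and S="?S"]) auto
  finally show ?thesis .
qed

lemma ws_e: "ws \<omega> (e i) = \<omega> i" by (simp add: ws_def lookup_e)
lemma ws_0: "ws \<omega> 0 = 0" by (simp add: ws_def)

lemma deg_add: "deg (a + b) = deg a + deg b"
proof -
  let ?S = "ks a \<union> ks b"
  have "deg (a+b) = (\<Sum>i\<in>?S. lk (a+b) i)"
    unfolding deg_def by (rule sum_keys_superset[where g="\<lambda>i x. x"]) (auto simp: keys_add_nat)
  also have "\<dots> = (\<Sum>i\<in>?S. lk a i) + (\<Sum>i\<in>?S. lk b i)"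
    by (simp add: lookup_add sum.distrib)
  also have "\<dots> = deg a + deg b"
    unfolding deg_def
    by (subst (1 2) sum_keys_superset[where g="\<lambda>i x. x" and S="?S"]) auto
  finally show ?thesis .
qed

lemma wt_add: "wt (a + b) = wt a + wt b"
proof -
  let ?S = "ks a \<union> ks b"
  have "wt (a+b) = (\<Sum>i\<in>?S. i * lk (a+b) i)"
    unfolding wt_def by (rule sum_keys_superset[where g="\<lambda>i x. i * x"]) (auto simp: keys_add_nat)
  also have "\<dots> = (\<Sum>i\<in>?S. i * lk a i) + (\<Sum>i\<in>?S. i * lk b i)"
    by (simp add: lookup_add sum.distrib algebra_simps)
  also have "\<dots> = wt a + wt b"
    unfolding wt_def
    by (subst (1 2) sum_keys_superset[where g="\<lambda>i x. i * x" and S="?S"]) auto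
  finally show ?thesis .
qed

lemma deg_e[simp]: "deg (e i) = 1" by (simp add: deg_def lookup_e)
lemma wt_e[simp]: "wt (e i) = i" by (simp add: wt_def lookup_e)
lemma deg_0[simp]: "deg 0 = 0" by (simp add: deg_def)
lemma wt_0[simp]: "wt 0 = 0" by (simp add: wt_def)

lemma deg_eq_0: "deg a = 0 \<longleftrightarrow> a = 0"
  by (auto simp: deg_def in_keys_iff poly_mapping_eq_iff fun_eq_iff)

lemma mon_split: "i \<in> ks a \<Longrightarrow> a = (a - e i) + e i"
  by (rule poly_mapping_eqI) (auto simp: lookup_add lookup_minus lookup_e in_keys_iff)

lemma X_0: "X 0 = 1" by (simp add: X_def)

definition leib :: "(mp \<Rightarrow> mp) \<Rightarrow> bool" where
  "leib C \<longleftrightarrow> lin C \<and> (\<forall>p q. C (p * q) = C p * q + p * C q)"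

lemma leib_Der: "leib (Der \<sigma> w)" by (simp add: leib_def lin_Der Der_mult)

lemma leib_one: "leib C \<Longrightarrow> C 1 = 0"
proof -
  assume "leib C"
  then have "C (1 * 1) = C 1 * 1 + 1 * C 1" unfolding leib_def by blast
  then have "C 1 = C 1 + C 1" by simp
  then show ?thesis by (metis add_cancel_right_right)
qed

lemma leib_diag:
  assumes C: "leib C" and v: "\<And>i. C (X (e i)) = sc (\<omega> i) (X (e i))"
  shows "C (X a) = sc (ws \<omega> a) (X a)"
proof (induction "deg a" arbitrary: a)
  case 0
  then have "a = 0" by (simp add: deg_eq_0)
  then show ?case using leib_one[OF C] by (simp add: X_0 ws_0)
next
  case (Suc n)
  then have "a \<noteq> 0" by auto
  then obtain i where i: "i \<in> ks a" by (metis keys_eq_empty ex_in_conv)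
  define b where "b = a - e i"
  have ab: "a = b + e i" using mon_split[OF i] by (simp add: b_def)
  have "deg b = n" using Suc(2) ab deg_add[of b "e i"] by simp
  then have IH: "C (X b) = sc (ws \<omega> b) (X b)" using Suc(1) by simp
  have "C (X a) = C (X b * X (e i))" by (simp add: ab X_mult)
  also have "\<dots> = C (X b) * X (e i) + X b * C (X (e i))" using C by (simp add: leib_def)
  also have "\<dots> = sc (ws \<omega> b + \<omega> i) (X a)"
    by (simp add: IH v sc_mult_left sc_mult_right X_mult ab V.scale_left_distrib)
  finally show ?case by (simp add: ab ws_add ws_e)
qed

lemma leib_comm: "leib C \<Longrightarrow> leib D \<Longrightarrow> leib (\<lambda>p. C (D p) - D (C p))"
  unfolding leib_def
proof (intro conjI allI)
  assume a: "lin C \<and> (\<forall>p q. C (p * q) = C p * q + p * C q)" "lin D \<and> (\<forall>p q. D (p * q) = D p * q + p * D q)"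
  show "lin (\<lambda>p. C (D p) - D (C p))"
    using a by (intro linI) (simp_all add: lin_add lin_scale V.scale_right_diff_distrib)
  fix p q
  show "C (D (p * q)) - D (C (p * q)) = (C (D p) - D (C p)) * q + p * (C (D q) - D (C q))"
    using a by (simp add: lin_add algebra_simps)
qed

lemma Dm_e: "Dm \<sigma> w (e i) = sc (w i) (X (e (\<sigma> i)))"
  by (simp add: Dm_def lookup_e)


definition wE :: "nat \<Rightarrow> nat \<Rightarrow> rat" where "wE r i = of_nat (Suc i) * (of_nat r - of_nat i)"
definition wF :: "nat \<Rightarrow> rat" where "wF i = (if i = 0 then 0 else 1)"
definition Eop :: "nat \<Rightarrow> mp \<Rightarrow> mp" where "Eop r = Der Suc (wE r)"
definition Fop :: "mp \<Rightarrow> mp" where "Fop = Der (\<lambda>i. i - 1) wF"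

lemma lin_E: "lin (Eop r)" by (simp add: Eop_def lin_Der)
lemma lin_F: "lin Fop" by (simp add: Fop_def lin_Der)
lemma leib_E: "leib (Eop r)" by (simp add: Eop_def leib_Der)
lemma leib_F: "leib Fop" by (simp add: Fop_def leib_Der)

lemma E_var: "Eop r (X (e i)) = sc (wE r i) (X (e (Suc i)))"
  by (simp add: Eop_def Der_X Dm_e)
lemma F_var: "Fop (X (e i)) = sc (wF i) (X (e (i - 1)))"
  by (simp add: Fop_def Der_X Dm_e)

lemma com_var: "Eop r (Fop (X (e i))) - Fop (Eop r (X (e i))) = sc (2 * of_nat i - of_nat r) (X (e i))"
proof (cases i)
  case 0
  then show ?thesis
    by (simp add: F_var E_var lin_scale[OF lin_E] lin_0[OF lin_E] lin_scale[OF lin_F] wF_def wE_def)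
next
  case (Suc j)
  then show ?thesis
    by (simp add: F_var E_var lin_scale[OF lin_E] lin_scale[OF lin_F] wF_def wE_def
        V.scale_left_diff_distrib[symmetric]) (simp add: algebra_simps)
qed

lemma ws_lin: "ws (\<lambda>i. 2 * of_nat i - of_nat r) a = 2 * of_nat (wt a) - of_nat r * of_nat (deg a)"
  by (simp add: ws_def wt_def deg_def algebra_simps sum_subtractf sum_distrib_left)

lemma com_X: "Eop r (Fop (X a)) - Fop (Eop r (X a)) = sc (2 * of_nat (wt a) - of_nat r * of_nat (deg a)) (X a)"
  using leib_diag[OF leib_comm[OF leib_E leib_F] com_var, of r a] by (simp add: ws_lin)

lemma com_lin: "lin (\<lambda>p. Eop r (Fop p) - Fop (Eop r p))"
  using leib_comm[OF leib_E leib_F] by (simp add: leib_def)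

definition Q :: "nat \<Rightarrow> mp" where
  "Q r = (\<Sum>i\<le>r. sc ((-1)^i) (X (e i + e (r - i))))"

lemma E_pair: "Eop r (X (e i + e j)) = sc (wE r i) (X (e (Suc i) + e j)) + sc (wE r j) (X (e i + e (Suc j)))"
proof -
  have "Eop r (X (e i + e j)) = Eop r (X (e i) * X (e j))" by (simp add: X_mult)
  also have "\<dots> = Eop r (X (e i)) * X (e j) + X (e i) * Eop r (X (e j))"
    using leib_E by (simp add: leib_def)
  finally show ?thesis by (simp add: E_var sc_mult_left sc_mult_right X_mult)
qed

lemma F_pair: "Fop (X (e i + e j)) = sc (wF i) (X (e (i - 1) + e j)) + sc (wF j) (X (e i + e (j - 1)))"
proof -
  have "Fop (X (e i + e j)) = Fop (X (e i) * X (e j))" by (simp add: X_mult)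
  also have "\<dots> = Fop (X (e i)) * X (e j) + X (e i) * Fop (X (e j))"
    using leib_F by (simp add: leib_def)
  finally show ?thesis by (simp add: F_var sc_mult_left sc_mult_right X_mult)
qed

lemma EQ: "Eop r (Q r) = 0"
proof (cases r)
  case 0
  then show ?thesis by (simp add: Q_def E_pair wE_def lin_scale[OF lin_E])
next
  case (Suc s)
  let ?f = "\<lambda>i. sc ((-1)^i) (sc (wE r i) (X (e (Suc i) + e (r - i))))"
  let ?g = "\<lambda>i. sc ((-1)^i) (sc (wE r (r - i)) (X (e i + e (Suc (r - i)))))"
  have "Eop r (Q r) = (\<Sum>i\<le>r. ?f i) + (\<Sum>i\<le>r. ?g i)"
    by (simp add: Q_def lin_sum[OF lin_E] lin_scale[OF lin_E] E_pair V.scale_right_distrib sum.distrib)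
  also have "(\<Sum>i\<le>r. ?f i) = (\<Sum>i\<le>s. ?f i)"
    using Suc by (simp add: wE_def)
  also have "(\<Sum>i\<le>r. ?g i) = (\<Sum>i\<le>s. ?g (Suc i))"
    using Suc by (simp add: sum.atMost_Suc_shift wE_def del: sum.atMost_Suc)
  also have "(\<Sum>i\<le>s. ?g (Suc i)) = - (\<Sum>i\<le>s. ?f i)"
    unfolding sum_negf[symmetric]
  proof (rule sum.cong[OF refl])
    fix i assume "i \<in> {..s}"
    then have i: "i \<le> s" by simp
    have 1: "Suc (r - Suc i) = r - i" using i Suc by simp
    have 2: "wE r (r - Suc i) = wE r i" using i Suc by (simp add: wE_def of_nat_diff algebra_simps)
    show "?g (Suc i) = - ?f i"
      using 1 2 by (simp add: V.scale_scale add.commute)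
  qed
  finally show ?thesis by simp
qed

lemma FQ: "Fop (Q r) = 0"
proof (cases r)
  case 0
  then show ?thesis by (simp add: Q_def F_pair wF_def lin_scale[OF lin_F])
next
  case (Suc s)
  let ?f = "\<lambda>i. sc ((-1)^i) (sc (wF i) (X (e (i - 1) + e (r - i))))"
  let ?g = "\<lambda>i. sc ((-1)^i) (sc (wF (r - i)) (X (e i + e (r - i - 1))))"
  have "Fop (Q r) = (\<Sum>i\<le>r. ?f i) + (\<Sum>i\<le>r. ?g i)"
    by (simp add: Q_def lin_sum[OF lin_F] lin_scale[OF lin_F] F_pair V.scale_right_distrib sum.distrib)
  also have "(\<Sum>i\<le>r. ?f i) = (\<Sum>i\<le>s. ?f (Suc i))"
    using Suc by (simp add: sum.atMost_Suc_shift wF_def del: sum.atMost_Suc)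
  also have "(\<Sum>i\<le>r. ?g i) = (\<Sum>i\<le>s. ?g i)"
    using Suc by (simp add: wF_def)
  also have "(\<Sum>i\<le>s. ?f (Suc i)) = - (\<Sum>i\<le>s. ?g i)"
    unfolding sum_negf[symmetric]
  proof (rule sum.cong[OF refl])
    fix i assume "i \<in> {..s}"
    then have i: "i \<le> s" by simp
    have 1: "r - Suc i = r - i - 1" by simp
    have 2: "wF (r - i) = 1" "wF (Suc i) = 1" using i Suc by (simp_all add: wF_def)
    show "?f (Suc i) = - ?g i"
      using 1 2 by (simp add: V.scale_scale)
  qed
  finally show ?thesis by simp
qed

lemma Q_nonzero: assumes "even r" "r \<noteq> 0" shows "Q r \<noteq> 0"
proof -
  have eq: "e i + e (r - i) = e 0 + e r \<longleftrightarrow> i = 0 \<or> i = r" if "i \<le> r" for i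
  proof
    assume h: "e i + e (r - i) = e 0 + e r"
    have "lk (e i + e (r - i)) 0 = lk (e 0 + e r) 0" using h by simp
    then show "i = 0 \<or> i = r" using assms that by (auto simp: lookup_add lookup_e split: if_splits)
  next
    assume "i = 0 \<or> i = r" then show "e i + e (r - i) = e 0 + e r" by (auto simp: add.commute)
  qed
  have "lk (Q r) (e 0 + e r) = (\<Sum>i\<le>r. (-1)^i * (if i = 0 \<or> i = r then 1 else 0))"
    unfolding Q_def lookup_sum lookup_sc lookup_X
    by (rule sum.cong[OF refl]) (simp add: eq)
  also have "\<dots> = (\<Sum>i\<in>{0, r}. (-1)^i)"
    by (rule sum.mono_neutral_cong_right) auto
  also have "\<dots> = 2" using assms by simp
  finally show ?thesis by auto
qed


lemma lin_span_into: "lin f \<Longrightarrow> (\<And>b. b \<in> S \<Longrightarrow> f b \<in> V.span T) \<Longrightarrow> v \<in> V.span S \<Longrightarrow> f v \<in> V.span T"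
proof -
  assume f: "lin f" and h: "\<And>b. b \<in> S \<Longrightarrow> f b \<in> V.span T" and v: "v \<in> V.span S"
  have "f v \<in> f ` V.span S" using v by simp
  also have "\<dots> = V.span (f ` S)" using VP.linear_span_image[OF f] by simp
  also have "\<dots> \<subseteq> V.span (V.span T)" using h by (intro V.span_mono) auto
  finally show ?thesis by (simp add: V.span_span)
qed

locale sl2 =
  fixes E F :: "mp \<Rightarrow> mp" and A B :: "nat \<Rightarrow> mp set" and N :: nat
  assumes linE: "lin E" and linF: "lin F"
    and subA: "\<And>d. V.subspace (A d)" and subB: "\<And>d. V.subspace (B d)"
    and EA: "\<And>d v. v \<in> A d \<Longrightarrow> E v \<in> A (Suc d)"
    and FA: "\<And>d v. v \<in> A (Suc d) \<Longrightarrow> F v \<in> A d"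
    and FA0: "\<And>v. v \<in> A 0 \<Longrightarrow> F v = 0"
    and EB: "\<And>d v. v \<in> B d \<Longrightarrow> E v \<in> B (Suc d)"
    and FB: "\<And>d v. v \<in> B (Suc d) \<Longrightarrow> F v \<in> B d"
    and H: "\<And>d v. v \<in> A d \<Longrightarrow> E (F v) - F (E v) = sc (2 * of_nat d - of_nat N) v"
begin

lemma Fpow_A: "v \<in> A d \<Longrightarrow> j \<le> d \<Longrightarrow> (F ^^ j) v \<in> A (d - j)"
proof (induction j)
  case 0 then show ?case by simp
next
  case (Suc j)
  then have "(F ^^ j) v \<in> A (Suc (d - Suc j))" by (simp add: Suc_diff_Suc)
  then show ?case by (simp add: FA)
qed

lemma Fpow_B: "v \<in> B (d + j) \<Longrightarrow> (F ^^ j) v \<in> B d"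
proof (induction j arbitrary: v)
  case 0 then show ?case by simp
next
  case (Suc j)
  then have "F v \<in> B (d + j)" using FB by simp
  then show ?case using Suc(1) by (simp add: funpow_Suc_right del: funpow.simps)
qed

lemma comm:
  assumes v: "v \<in> A d" and j: "j \<le> d"
  shows "E ((F ^^ Suc j) v) - (F ^^ Suc j) (E v)
         = sc (of_nat (Suc j) * ((2 * of_nat d - of_nat N) - of_nat j)) ((F ^^ j) v)"
  using j
proof (induction j)
  case 0 then show ?case using H[OF v] by simp
next
  case (Suc j)
  let ?l = "2 * of_nat d - of_nat N :: rat"
  let ?u = "(F ^^ Suc j) v"
  have u: "?u \<in> A (d - Suc j)" using Fpow_A[OF v Suc(2)] .
  have IH: "E ?u = (F ^^ Suc j) (E v) + sc (of_nat (Suc j) * (?l - of_nat j)) ((F ^^ j) v)"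
    using Suc by (simp add: algebra_simps)
  have "E (F ?u) = F (E ?u) + sc (2 * of_nat (d - Suc j) - of_nat N) ?u"
    using H[OF u] by (simp add: algebra_simps)
  also have "\<dots> = F ((F ^^ Suc j) (E v)) + sc (of_nat (Suc j) * (?l - of_nat j)) ?u
        + sc (2 * of_nat (d - Suc j) - of_nat N) ?u"
    unfolding IH by (simp add: lin_add[OF linF] lin_scale[OF linF])
  also have "\<dots> = F ((F ^^ Suc j) (E v)) + sc (of_nat (Suc (Suc j)) * (?l - of_nat (Suc j))) ?u"
  proof -
    have "of_nat (Suc j) * (?l - of_nat j) + (2 * of_nat (d - Suc j) - of_nat N)
          = of_nat (Suc (Suc j)) * (?l - of_nat (Suc j))"
      using Suc(2) by (simp add: of_nat_diff algebra_simps)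
    then show ?thesis by (simp add: add.assoc V.scale_left_distrib[symmetric])
  qed
  finally show ?case by simp
qed

lemma key:
  assumes dN: "2 * d < N" and v: "v \<in> A d" and Ev: "E v \<in> B (Suc d)"
  shows "v \<in> B d"
proof -
  let ?l = "2 * of_nat d - of_nat N :: rat"
  have l: "?l < 0" using dN by linarith
  have c: "of_nat (Suc j) * (?l - of_nat j) \<noteq> 0" for j :: nat
    using l by (auto simp: mult_eq_0_iff)
  have step: "(F ^^ j) v \<in> B i" if "j \<le> d" "j + i = d" "E ((F ^^ Suc j) v) \<in> B i" for i j
  proof -
    have "(F ^^ Suc j) (E v) \<in> B i"
      by (rule Fpow_B) (use Ev that in \<open>simp add: add.commute\<close>)
    then have "E ((F ^^ Suc j) v) - (F ^^ Suc j) (E v) \<in> B i"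
      using that subB V.subspace_diff by blast
    then have "sc (of_nat (Suc j) * (?l - of_nat j)) ((F ^^ j) v) \<in> B i"
      using comm[OF v that(1)] by simp
    then have "sc (inverse (of_nat (Suc j) * (?l - of_nat j))) (sc (of_nat (Suc j) * (?l - of_nat j)) ((F ^^ j) v)) \<in> B i"
      using subB V.subspace_scale by blast
    moreover
    have "inverse (of_nat (Suc j) * (?l - of_nat j)) * (of_nat (Suc j) * (?l - of_nat j)) = 1"
      using c[of j] by (rule left_inverse)
    ultimately show ?thesis by (simp only: V.scale_scale V.scale_one)
  qed
  have "\<forall>i\<le>d. (F ^^ (d - i)) v \<in> B i"
  proof (intro allI impI)
    fix i assume "i \<le> d"
    then show "(F ^^ (d - i)) v \<in> B i"
    proof (induction i)
      case 0
      have "(F ^^ d) v \<in> A 0" using Fpow_A[OF v, of d] by simp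
      then have "(F ^^ Suc d) v = 0" using FA0 by simp
      then have "E ((F ^^ Suc d) v) \<in> B 0" using lin_0[OF linE] subB V.subspace_0 by simp
      then show ?case using step[of d 0] by simp
    next
      case (Suc i)
      then have "(F ^^ (d - i)) v \<in> B i" by simp
      then have "E ((F ^^ Suc (d - Suc i)) v) \<in> B (Suc i)" using Suc(2) EB by (simp add: Suc_diff_Suc)
      then show ?case using step[of "d - Suc i" "Suc i"] Suc(2) by simp
    qed
  qed
  then show ?thesis by (metis diff_zero funpow_0 le_refl diff_self_eq_0)
qed

end


lemma count_lemma:
  assumes linE: "lin E"
    and fin: "finite SA0" "finite SA1" "finite SB0" "finite SB1"
    and ind: "V.independent SA0" "V.independent SA1" "V.independent SB0" "V.independent SB1"
    and BA0: "SB0 \<subseteq> V.span SA0" and BA1: "SB1 \<subseteq> V.span SA1"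
    and EA: "\<And>v. v \<in> V.span SA0 \<Longrightarrow> E v \<in> V.span SA1"
    and key: "\<And>v. v \<in> V.span SA0 \<Longrightarrow> E v \<in> V.span SB1 \<Longrightarrow> v \<in> V.span SB0"
  shows "card SA0 + card SB1 \<le> card SA1 + card SB0"
proof -
  obtain T where T: "SB0 \<subseteq> T" "T \<subseteq> V.span SA0" "V.independent T" "V.span SA0 \<subseteq> V.span T"
    using V.maximal_independent_subset_extend[OF BA0 ind(3)] by blast
  have fT: "finite T" and cT1: "card T \<le> card SA0"
    using V.independent_span_bound[OF fin(1) T(3) T(2)] by auto
  have cT2: "card SA0 \<le> card T"
  proof -
    have "SA0 \<subseteq> V.span T" using T(4) V.span_superset[of SA0] by blast
    then show ?thesis using V.independent_span_bound[OF fT ind(1)] by blast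
  qed
  define C where "C = T - SB0"
  have fC: "finite C" using fT by (simp add: C_def)
  have cC: "card C = card T - card SB0" using T(1) fT by (simp add: C_def card_Diff_subset fin(3))
  have cSB0: "card SB0 \<le> card T" using T(1) fT by (simp add: card_mono)
  have spT: "V.span T \<subseteq> V.span SA0"
    using V.span_mono[OF T(2)] by (simp add: V.span_span)
  have main: "V.independent (E ` C' \<union> SB1) \<and> card (E ` C' \<union> SB1) = card C' + card SB1"
    if "C' \<subseteq> C" for C'
    using finite_subset[OF that fC] that
  proof (induction C' rule: finite_subset_induct')
    show "V.independent (E ` {} \<union> SB1) \<and> card (E ` {} \<union> SB1) = card {} + card SB1"
      using ind(4) by simp
  next
    fix c C'
    assume fC': "finite C'" and cC: "c \<in> C" and C'C: "C' \<subseteq> C" and cn: "c \<notin> C'"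
    assume IH: "V.independent (E ` C' \<union> SB1) \<and> card (E ` C' \<union> SB1) = card C' + card SB1"
    have notin: "E c \<notin> V.span (E ` C' \<union> SB1)"
    proof
      assume "E c \<in> V.span (E ` C' \<union> SB1)"
      then obtain x y where xy: "E c = x + y" "x \<in> V.span (E ` C')" "y \<in> V.span SB1"
      proof -
        have "E c \<in> {x + y | x y. x \<in> V.span (E ` C') \<and> y \<in> V.span SB1}"
          using \<open>E c \<in> V.span (E ` C' \<union> SB1)\<close> by (simp only: V.span_Un)
        then show ?thesis using that by blast
      qed
      obtain u where u: "u \<in> V.span C'" "x = E u"
      proof -
        have "x \<in> E ` V.span C'" using xy(2) VP.linear_span_image[OF linE, of C'] by simp
        then show ?thesis using that by blast
      qed
      have cT: "c \<in> T" "c \<notin> SB0" using cC by (auto simp: C_def)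
      have "C' \<subseteq> T" using C'C by (auto simp: C_def)
      then have uA: "u \<in> V.span SA0"
        using u(1) V.span_mono[of C' T] spT by blast
      have cA: "c \<in> V.span SA0" using cT T(2) by auto
      have "E (c - u) = y" using xy u by (simp add: lin_diff[OF linE])
      then have "c - u \<in> V.span SB0"
        using key[of "c - u"] V.span_diff[OF cA uA] xy(3) by simp
      then have "c - u \<in> V.span (T - {c})"
        using V.span_mono[of SB0 "T - {c}"] T(1) cT by auto
      moreover have "C' \<subseteq> T - {c}" using C'C cn by (auto simp: C_def)
      then have "u \<in> V.span (T - {c})"
        using u(1) V.span_mono[of C' "T - {c}"] by blast
      ultimately have "(c - u) + u \<in> V.span (T - {c})"
        by (rule V.span_add)
      then have "c \<in> V.span (T - {c})" by simp
      then have "V.dependent T" using cT(1) unfolding V.dependent_def by blast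
      then show False using T(3) by simp
    qed
    have ni: "E c \<notin> E ` C' \<union> SB1" using notin V.span_superset[of "E ` C' \<union> SB1"] by blast
    have fin2: "finite (E ` C' \<union> SB1)" using fC' fin(4) by simp
    show "V.independent (E ` insert c C' \<union> SB1) \<and> card (E ` insert c C' \<union> SB1) = card (insert c C') + card SB1"
      using IH V.independent_insertI[OF notin] ni fin2 fC' cn by simp
  qed
  have m: "V.independent (E ` C \<union> SB1)" "card (E ` C \<union> SB1) = card C + card SB1"
    using main[of C] by auto
  have "E ` C \<subseteq> V.span SA1"
  proof
    fix x assume "x \<in> E ` C"
    then obtain c where "c \<in> C" "x = E c" by blast
    then have "c \<in> V.span SA0" using T(2) by (auto simp: C_def)
    then show "x \<in> V.span SA1" using EA \<open>x = E c\<close> by blast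
  qed
  then have "E ` C \<union> SB1 \<subseteq> V.span SA1" using BA1 by blast
  then have "card (E ` C \<union> SB1) \<le> card SA1"
    using V.independent_span_bound[OF fin(2) m(1)] by blast
  then show ?thesis using m(2) cC cT1 cT2 cSB0 by linarith
qed


declare upt_Suc[simp del]

definition wtl :: "nat list \<Rightarrow> nat" where "wtl xs = (\<Sum>i<length xs. i * xs ! i)"
definition L :: "nat \<Rightarrow> nat \<Rightarrow> nat \<Rightarrow> nat list set" where
  "L r k d = {xs. length xs = Suc r \<and> sum_list xs = k \<and> wtl xs = d}"

definition Mon :: "nat \<Rightarrow> nat \<Rightarrow> nat \<Rightarrow> mon set" where
  "Mon r k d = {a. ks a \<subseteq> {..r} \<and> deg a = k \<and> wt a = d}"

definition lst :: "nat \<Rightarrow> mon \<Rightarrow> nat list" where "lst r a = map (lk a) [0..<Suc r]"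

lemma finite_L: "finite (L r k d)"
proof -
  have "L r k d \<subseteq> {xs. set xs \<subseteq> {0..k} \<and> length xs = Suc r}"
    by (auto simp: L_def member_le_sum_list)
  moreover have "finite {xs. set xs \<subseteq> {0..k} \<and> length xs = Suc r}"
    by (rule finite_lists_length_eq) simp
  ultimately show ?thesis by (rule finite_subset)
qed

lemma deg_upto: "ks a \<subseteq> {..r} \<Longrightarrow> deg a = (\<Sum>i<Suc r. lk a i)"
  unfolding deg_def by (rule sum_keys_superset[where g="\<lambda>i x. x"]) auto
lemma wt_upto: "ks a \<subseteq> {..r} \<Longrightarrow> wt a = (\<Sum>i<Suc r. i * lk a i)"
  unfolding wt_def by (rule sum_keys_superset[where g="\<lambda>i x. i * x"]) auto

lemma bij_Mon_L: "bij_betw (lst r) (Mon r k d) (L r k d)"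
proof (rule bij_betw_byWitness[where f'="Poly_Mapping.nth"])
  show "\<forall>a\<in>Mon r k d. Poly_Mapping.nth (lst r a) = a"
  proof
    fix a assume a: "a \<in> Mon r k d"
    show "Poly_Mapping.nth (lst r a) = a"
    proof (rule poly_mapping_eqI)
      fix i
      show "lk (Poly_Mapping.nth (lst r a)) i = lk a i"
        using a by (cases "i \<le> r") (auto simp: lst_def nth_default_def Mon_def in_keys_iff simp del: upt_Suc)
    qed
  qed
  show "\<forall>xs\<in>L r k d. lst r (Poly_Mapping.nth xs) = xs"
    by (auto simp: L_def lst_def nth_default_def simp del: upt_Suc intro!: nth_equalityI)
  show "lst r ` Mon r k d \<subseteq> L r k d"
  proof
    fix xs assume "xs \<in> lst r ` Mon r k d"
    then obtain a where a: "a \<in> Mon r k d" "xs = lst r a" by blast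
    have ka: "ks a \<subseteq> {..r}" using a(1) by (simp add: Mon_def)
    have "sum_list xs = deg a"
      by (simp add: a(2) lst_def deg_upto[OF ka] sum_set_upt_conv_sum_list_nat[symmetric] atLeast0LessThan)
    moreover have "wtl xs = wt a"
      by (simp add: a(2) lst_def wt_upto[OF ka] wtl_def)
    ultimately show "xs \<in> L r k d" using a by (simp add: L_def Mon_def lst_def)
  qed
  show "Poly_Mapping.nth ` L r k d \<subseteq> Mon r k d"
  proof
    fix a assume "a \<in> Poly_Mapping.nth ` L r k d"
    then obtain xs where xs: "xs \<in> L r k d" "a = Poly_Mapping.nth xs" by blast
    have la: "lk a i = (if i < Suc r then xs ! i else 0)" for i
      using xs by (simp add: L_def nth_default_def)
    have ka: "ks a \<subseteq> {..r}" by (auto simp: in_keys_iff la split: if_splits)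
    have ls: "lst r a = xs" using xs by (auto simp: L_def lst_def la nth_default_def intro!: nth_equalityI)
    have "deg a = sum_list (lst r a)"
      using ka by (simp add: lst_def deg_upto sum_set_upt_conv_sum_list_nat[symmetric] atLeast0LessThan)
    moreover have "wt a = wtl (lst r a)"
      using ka by (simp add: lst_def wt_upto wtl_def)
    ultimately show "a \<in> Mon r k d" using ka ls xs(1) by (simp add: Mon_def L_def)
  qed
qed

lemma finite_Mon: "finite (Mon r k d)"
  using bij_betw_finite[OF bij_Mon_L] finite_L by blast

lemma card_Mon: "card (Mon r k d) = card (L r k d)"
  using bij_betw_same_card[OF bij_Mon_L] .

declare upt_Suc[simp]


definition MonQ :: "nat \<Rightarrow> nat \<Rightarrow> nat \<Rightarrow> mon set" where
  "MonQ r k d = {c. ks c \<subseteq> {..r} \<and> deg c = k \<and> wt c + r = d}"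

lemma mon_step:
  assumes "i \<in> ks a"
  shows "deg (a - e i + e j) = deg a" "wt (a - e i + e j) + i = wt a + j"
    "ks (a - e i + e j) \<subseteq> ks a \<union> {j}"
proof -
  have s: "a = (a - e i) + e i" using mon_split[OF assms] .
  have "deg a = deg (a - e i) + 1" using deg_add[of "a - e i" "e i"] s by simp
  then show "deg (a - e i + e j) = deg a" by (simp add: deg_add)
  have "wt a = wt (a - e i) + i" using wt_add[of "a - e i" "e i"] s by simp
  then show "wt (a - e i + e j) + i = wt a + j" by (simp add: wt_add)
  show "ks (a - e i + e j) \<subseteq> ks a \<union> {j}"
    by (auto simp: in_keys_iff lookup_add lookup_minus lookup_e split: if_splits)
qed

lemma Dm_span: "(\<And>i. i \<in> ks a \<Longrightarrow> w i \<noteq> 0 \<Longrightarrow> a - e i + e (\<sigma> i) \<in> S) \<Longrightarrow> Dm \<sigma> w a \<in> V.span (X ` S)"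
  unfolding Dm_def
proof (rule V.span_sum)
  fix i assume h: "\<And>i. i \<in> ks a \<Longrightarrow> w i \<noteq> 0 \<Longrightarrow> a - e i + e (\<sigma> i) \<in> S" and i: "i \<in> ks a"
  show "sc (of_nat (lk a i) * w i) (X (a - e i + e (\<sigma> i))) \<in> V.span (X ` S)"
  proof (cases "w i = 0")
    case True then show ?thesis by (simp add: V.span_zero)
  next
    case False then show ?thesis using h[OF i] by (intro V.span_scale V.span_base) auto
  qed
qed

lemma E_X: "ks a \<subseteq> {..r} \<Longrightarrow> Eop r (X a) \<in> V.span (X ` Mon r (deg a) (Suc (wt a)))"
  unfolding Eop_def Der_X
proof (rule Dm_span)
  fix i assume ka: "ks a \<subseteq> {..r}" and i: "i \<in> ks a" and w: "wE r i \<noteq> 0"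
  have "i < r" using ka i w by (cases "i = r") (auto simp: wE_def)
  then show "a - e i + e (Suc i) \<in> Mon r (deg a) (Suc (wt a))"
    using mon_step[OF i, of "Suc i"] ka by (auto simp: Mon_def)
qed

lemma F_X: "ks a \<subseteq> {..r} \<Longrightarrow> wt a = Suc d \<Longrightarrow> Fop (X a) \<in> V.span (X ` Mon r (deg a) d)"
  unfolding Fop_def Der_X
proof (rule Dm_span)
  fix i assume ka: "ks a \<subseteq> {..r}" and wa: "wt a = Suc d" and i: "i \<in> ks a" and w: "wF i \<noteq> 0"
  have "i \<noteq> 0" using w by (auto simp: wF_def split: if_splits)
  moreover have "i \<le> r" using ka i by auto
  then have "ks (a - e i + e (i - 1)) \<subseteq> {..r}" using mon_step(3)[OF i, of "i - 1"] ka by auto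
  ultimately show "a - e i + e (i - 1) \<in> Mon r (deg a) d"
    using mon_step(1,2)[OF i, of "i - 1"] wa by (auto simp: Mon_def)
qed

lemma F_X0: "wt a = 0 \<Longrightarrow> Fop (X a) = 0"
proof -
  assume w: "wt a = 0"
  have "\<forall>i\<in>ks a. i * lk a i = 0" using w by (simp add: wt_def)
  then have "\<forall>i\<in>ks a. i = 0" by (auto simp: in_keys_iff)
  then show ?thesis unfolding Fop_def Der_X Dm_def by (simp add: wF_def)
qed

lemma Q_X: assumes "ks c \<subseteq> {..r}" shows "Q r * X c \<in> V.span (X ` Mon r (deg c + 2) (wt c + r))"
  unfolding Q_def sum_distrib_right
proof (rule V.span_sum)
  fix i assume i: "i \<in> {..r}"
  have "e i + e (r - i) + c \<in> Mon r (deg c + 2) (wt c + r)"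
    using i assms by (auto simp: Mon_def deg_add wt_add keys_add_nat)
  then show "sc ((-1)^i) (X (e i + e (r - i))) * X c \<in> V.span (X ` Mon r (deg c + 2) (wt c + r))"
    unfolding sc_mult_left X_mult by (intro V.span_scale V.span_base imageI)
qed

lemma E_QX: "Eop r (Q r * p) = Q r * Eop r p"
  using leib_E[of r] EQ[of r] by (simp add: leib_def)
lemma F_QX: "Fop (Q r * p) = Q r * Fop p"
  using leib_F FQ[of r] by (simp add: leib_def)


lemma Q_inj: assumes "even r" "r \<noteq> 0" shows "inj ((*) (Q r))"
  using Q_nonzero[OF assms] by (auto simp: inj_def)

lemma finite_MonQ: "finite (MonQ r k d)"
proof -
  have "MonQ r k d \<subseteq> Mon r k (d - r)" by (auto simp: MonQ_def Mon_def)
  then show ?thesis using finite_Mon finite_subset by blast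
qed

theorem sl2_count:
  assumes r: "even r" "r \<noteq> 0" and m: "2 \<le> m" and dN: "2 * d < r * m"
  shows "card (Mon r m d) + card (MonQ r (m-2) (Suc d)) \<le> card (Mon r m (Suc d)) + card (MonQ r (m-2) d)"
proof -
  define SA where "SA d = X ` Mon r m d" for d
  define SB where "SB d = (\<lambda>c. Q r * X c) ` MonQ r (m-2) d" for d
  have SB': "SB d = (*) (Q r) ` (X ` MonQ r (m-2) d)" for d by (auto simp: SB_def)
  define A where "A d = V.span (SA d)" for d
  define B where "B d = V.span (SB d)" for d
  have linQ: "lin ((*) (Q r))" using lin_mult_left .
  have EA: "Eop r v \<in> A (Suc d)" if "v \<in> A d" for v d
    using that unfolding A_def
  proof (rule lin_span_into[OF lin_E, rotated])
    fix b assume "b \<in> SA d"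
    then obtain a where a: "a \<in> Mon r m d" "b = X a" by (auto simp: SA_def)
    then show "Eop r b \<in> V.span (SA (Suc d))"
      using E_X[of a r] by (auto simp: Mon_def SA_def)
  qed
  have FA: "Fop v \<in> A d" if "v \<in> A (Suc d)" for v d
    using that unfolding A_def
  proof (rule lin_span_into[OF lin_F, rotated])
    fix b assume "b \<in> SA (Suc d)"
    then obtain a where a: "a \<in> Mon r m (Suc d)" "b = X a" by (auto simp: SA_def)
    then show "Fop b \<in> V.span (SA d)"
      using F_X[of a r d] by (auto simp: Mon_def SA_def)
  qed
  have FA0: "Fop v = 0" if "v \<in> A 0" for v
    using that unfolding A_def
    by (rule VP.linear_eq_0_on_span[OF lin_F, rotated]) (auto simp: SA_def Mon_def F_X0)
  have EB: "Eop r v \<in> B (Suc d)" if "v \<in> B d" for v d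
    using that unfolding B_def
  proof (rule lin_span_into[OF lin_E, rotated])
    fix b assume "b \<in> SB d"
    then obtain c where c: "c \<in> MonQ r (m-2) d" "b = Q r * X c" by (auto simp: SB_def)
    have "Eop r (X c) \<in> V.span (X ` Mon r (m-2) (Suc (wt c)))"
      using E_X[of c r] c by (auto simp: MonQ_def)
    then have "Q r * Eop r (X c) \<in> V.span (SB (Suc d))"
    proof (rule lin_span_into[OF linQ, rotated])
      fix b' assume "b' \<in> X ` Mon r (m-2) (Suc (wt c))"
      then obtain c' where "c' \<in> Mon r (m-2) (Suc (wt c))" "b' = X c'" by blast
      then have "Q r * b' \<in> SB (Suc d)" using c by (auto simp: SB_def MonQ_def Mon_def)
      then show "Q r * b' \<in> V.span (SB (Suc d))" by (rule V.span_base)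
    qed
    then show "Eop r b \<in> V.span (SB (Suc d))" using c by (simp add: E_QX)
  qed
  have FB: "Fop v \<in> B d" if "v \<in> B (Suc d)" for v d
    using that unfolding B_def
  proof (rule lin_span_into[OF lin_F, rotated])
    fix b assume "b \<in> SB (Suc d)"
    then obtain c where c: "c \<in> MonQ r (m-2) (Suc d)" "b = Q r * X c" by (auto simp: SB_def)
    show "Fop b \<in> V.span (SB d)"
    proof (cases "wt c")
      case 0
      then show ?thesis using c by (simp add: F_QX F_X0 V.span_zero)
    next
      case (Suc d')
      have "Fop (X c) \<in> V.span (X ` Mon r (m-2) d')"
        using F_X[of c r d'] c Suc by (auto simp: MonQ_def)
      then have "Q r * Fop (X c) \<in> V.span (SB d)"
      proof (rule lin_span_into[OF linQ, rotated])
        fix b' assume "b' \<in> X ` Mon r (m-2) d'"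
        then obtain c' where "c' \<in> Mon r (m-2) d'" "b' = X c'" by blast
        then have "Q r * b' \<in> SB d" using c Suc by (auto simp: SB_def MonQ_def Mon_def)
        then show "Q r * b' \<in> V.span (SB d)" by (rule V.span_base)
      qed
      then show ?thesis using c by (simp add: F_QX)
    qed
  qed
  have H: "Eop r (Fop v) - Fop (Eop r v) = sc (2 * of_nat d - of_nat (r * m)) v" if "v \<in> A d" for v d
  proof -
    have ls: "lin (\<lambda>v. sc (2 * of_nat d - of_nat (r * m)) v)"
      by (rule linI) (simp_all add: V.scale_right_distrib V.scale_scale mult.commute)
    show ?thesis
      using that unfolding A_def
    proof (rule VP.linear_eq_on[OF com_lin ls])
      fix b assume "b \<in> SA d"
      then obtain a where a: "a \<in> Mon r m d" "b = X a" by (auto simp: SA_def)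
      then show "Eop r (Fop b) - Fop (Eop r b) = sc (2 * of_nat d - of_nat (r * m)) b"
        using com_X[of r a] by (simp add: Mon_def mult.commute)
    qed
  qed
  interpret S: sl2 "Eop r" Fop A B "r * m"
  proof (rule sl2.intro)
    show "V.subspace (A d)" "V.subspace (B d)" for d by (simp_all add: A_def B_def)
  qed (fact lin_E lin_F EA FA FA0 EB FB H)+
  have injQX: "inj (\<lambda>c. Q r * X c)"
    using Q_inj[OF r] X_inj by (auto simp: inj_def)
  have cA: "card (SA d) = card (Mon r m d)" for d
    unfolding SA_def by (rule card_image) (rule inj_on_subset[OF X_inj], simp)
  have cB: "card (SB d) = card (MonQ r (m-2) d)" for d
    unfolding SB_def by (rule card_image) (rule inj_on_subset[OF injQX], simp)
  have indA: "V.independent (SA d)" for d by (simp add: SA_def indep_X)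
  have indB: "V.independent (SB d)" for d
    unfolding SB'
    by (rule VP.linear_independent_injective_image[OF linQ indep_X])
       (rule inj_on_subset[OF Q_inj[OF r]], simp)
  have BA: "SB d \<subseteq> V.span (SA d)" for d
  proof
    fix b assume "b \<in> SB d"
    then obtain c where c: "c \<in> MonQ r (m-2) d" "b = Q r * X c" by (auto simp: SB_def)
    have "Suc (Suc (m - 2)) = m" using m by simp
    then show "b \<in> V.span (SA d)"
      using Q_X[of c r] c by (auto simp: MonQ_def SA_def)
  qed
  have "card (SA d) + card (SB (Suc d)) \<le> card (SA (Suc d)) + card (SB d)"
  proof (rule count_lemma[OF lin_E])
    show "finite (SA d)" "finite (SA (Suc d))" "finite (SB d)" "finite (SB (Suc d))"
      by (simp_all add: SA_def SB_def finite_Mon finite_MonQ)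
    show "V.independent (SA d)" "V.independent (SA (Suc d))" "V.independent (SB d)" "V.independent (SB (Suc d))"
      by (simp_all add: indA indB)
    show "SB d \<subseteq> V.span (SA d)" "SB (Suc d) \<subseteq> V.span (SA (Suc d))" by (rule BA)+
    show "\<And>v. v \<in> V.span (SA d) \<Longrightarrow> Eop r v \<in> V.span (SA (Suc d))"
      using EA by (simp add: A_def)
    show "\<And>v. v \<in> V.span (SA d) \<Longrightarrow> Eop r v \<in> V.span (SB (Suc d)) \<Longrightarrow> v \<in> V.span (SB d)"
      using S.key[OF dN] by (simp add: A_def B_def)
  qed
  then show ?thesis by (simp add: cA cB)
qed


definition cnt :: "nat \<Rightarrow> nat \<Rightarrow> nat \<Rightarrow> nat" where "cnt r k d = card (L r k d)"

lemma wtl_Cons: "wtl (x # ys) = wtl ys + sum_list ys"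
proof -
  have "wtl (x # ys) = (\<Sum>i<Suc (length ys). i * (x # ys) ! i)" by (simp add: wtl_def)
  also have "\<dots> = (\<Sum>i<length ys. Suc i * ys ! i)" by (subst sum.lessThan_Suc_shift) simp
  also have "\<dots> = wtl ys + (\<Sum>i<length ys. ys ! i)" by (simp add: wtl_def sum.distrib)
  also have "(\<Sum>i<length ys. ys ! i) = sum_list ys"
    by (simp add: sum_list_sum_nth atLeast0LessThan)
  finally show ?thesis .
qed

lemma wtl_le: "length xs = Suc r \<Longrightarrow> wtl xs \<le> r * sum_list xs"
proof -
  assume l: "length xs = Suc r"
  have "wtl xs \<le> (\<Sum>i<length xs. r * xs ! i)"
    unfolding wtl_def by (rule sum_mono) (use l in auto)
  also have "\<dots> = r * sum_list xs"
    by (simp add: sum_distrib_left[symmetric] sum_list_sum_nth atLeast0LessThan)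
  finally show ?thesis .
qed

lemma cnt_big: "r * k < d \<Longrightarrow> cnt r k d = 0"
proof -
  assume "r * k < d"
  then have "L r k d = {}" using wtl_le by (fastforce simp: L_def)
  then show ?thesis by (simp add: cnt_def)
qed

lemma wtl_rev: "length xs = Suc r \<Longrightarrow> wtl xs + wtl (rev xs) = r * sum_list xs"
proof -
  assume l: "length xs = Suc r"
  have "wtl (rev xs) = (\<Sum>i<Suc r. i * xs ! (Suc r - Suc i))"
    using l by (simp add: wtl_def rev_nth)
  also have "\<dots> = (\<Sum>i<Suc r. (r - i) * xs ! i)"
    using sum.nat_diff_reindex[of "\<lambda>i. i * xs ! (Suc r - Suc i)" "Suc r"]
    by (simp add: sum.nat_diff_reindex[where g="\<lambda>i. (r - i) * xs ! i", symmetric])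
  finally have "wtl xs + wtl (rev xs) = (\<Sum>i<Suc r. i * xs ! i + (r - i) * xs ! i)"
    using l by (simp add: wtl_def sum.distrib)
  also have "\<dots> = (\<Sum>i<Suc r. r * xs ! i)"
    by (rule sum.cong) (auto simp: add_mult_distrib[symmetric])
  also have "\<dots> = r * sum_list xs"
    using l by (simp add: sum_distrib_left[symmetric] sum_list_sum_nth atLeast0LessThan)
  finally show ?thesis .
qed

lemma cnt_sym: "d \<le> r * k \<Longrightarrow> cnt r k d = cnt r k (r * k - d)"
proof -
  assume d: "d \<le> r * k"
  have "bij_betw rev (L r k d) (L r k (r * k - d))"
  proof (rule bij_betw_byWitness[where f'=rev])
    show "rev ` L r k d \<subseteq> L r k (r * k - d)"
      using wtl_rev by (fastforce simp: L_def)
    show "rev ` L r k (r * k - d) \<subseteq> L r k d"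
    proof
      fix ys assume "ys \<in> rev ` L r k (r * k - d)"
      then obtain xs where xs: "xs \<in> L r k (r*k - d)" "ys = rev xs" by blast
      then show "ys \<in> L r k d" using wtl_rev[of xs r] d by (auto simp: L_def)
    qed
  qed auto
  then show ?thesis unfolding cnt_def by (rule bij_betw_same_card)
qed

lemma L0: "L 0 k d = (if d = 0 then {[k]} else {})"
  by (auto simp: L_def wtl_def length_Suc_conv)

lemma cnt_r0: "cnt 0 k d = (if d = 0 then 1 else 0)"
  by (simp add: cnt_def L0)

lemma L_k0: "L r 0 d = (if d = 0 then {replicate (Suc r) 0} else {})"
proof -
  have "xs = replicate (Suc r) 0" if "length xs = Suc r" "sum_list xs = 0" for xs :: "nat list"
    using that by (metis in_set_replicate sum_list_eq_0_iff replicate_length_same)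
  moreover have "wtl (replicate (Suc r) 0) = 0" by (auto simp: wtl_def simp del: replicate_Suc intro!: sum.neutral)
  ultimately show ?thesis by (auto simp: L_def)
qed

lemma cnt_k0: "cnt r 0 d = (if d = 0 then 1 else 0)"
  by (simp add: cnt_def L_k0)

lemma cnt_rec: "cnt (Suc r) (Suc k) d = cnt (Suc r) k d + (if Suc k \<le> d then cnt r (Suc k) (d - Suc k) else 0)"
proof -
  let ?S1 = "{xs \<in> L (Suc r) (Suc k) d. hd xs \<noteq> 0}"
  let ?S0 = "{xs \<in> L (Suc r) (Suc k) d. hd xs = 0}"
  have split: "L (Suc r) (Suc k) d = ?S1 \<union> ?S0" by auto
  have fin: "finite ?S1" "finite ?S0" using finite_L by auto
  have c1: "card ?S1 = cnt (Suc r) k d"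
  proof -
    have "bij_betw (\<lambda>xs. (hd xs - 1) # tl xs) ?S1 (L (Suc r) k d)"
    proof (rule bij_betw_byWitness[where f'="\<lambda>xs. Suc (hd xs) # tl xs"])
      show "\<forall>a\<in>?S1. Suc (hd ((hd a - 1) # tl a)) # tl ((hd a - 1) # tl a) = a"
        by (auto simp: L_def length_Suc_conv)
      show "\<forall>a\<in>L (Suc r) k d. (hd (Suc (hd a) # tl a) - 1) # tl (Suc (hd a) # tl a) = a"
        by (auto simp: L_def length_Suc_conv)
      show "(\<lambda>xs. (hd xs - 1) # tl xs) ` ?S1 \<subseteq> L (Suc r) k d"
        by (auto simp: L_def length_Suc_conv wtl_Cons)
      show "(\<lambda>xs. Suc (hd xs) # tl xs) ` L (Suc r) k d \<subseteq> ?S1"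
        by (auto simp: L_def length_Suc_conv wtl_Cons)
    qed
    then show ?thesis unfolding cnt_def by (rule bij_betw_same_card)
  qed
  have c0: "card ?S0 = (if Suc k \<le> d then cnt r (Suc k) (d - Suc k) else 0)"
  proof (cases "Suc k \<le> d")
    case True
    have "bij_betw tl ?S0 (L r (Suc k) (d - Suc k))"
    proof (rule bij_betw_byWitness[where f'="\<lambda>xs. 0 # xs"])
      show "\<forall>a\<in>?S0. 0 # tl a = a" by (auto simp: L_def length_Suc_conv)
      show "\<forall>a\<in>L r (Suc k) (d - Suc k). tl (0 # a) = a" by simp
      show "tl ` ?S0 \<subseteq> L r (Suc k) (d - Suc k)"
        by (auto simp: L_def length_Suc_conv wtl_Cons)
      show "(\<lambda>xs. 0 # xs) ` L r (Suc k) (d - Suc k) \<subseteq> ?S0"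
        using True by (auto simp: L_def wtl_Cons)
    qed
    then show ?thesis using True unfolding cnt_def by (simp add: bij_betw_same_card)
  next
    case False
    have "?S0 = {}" using False by (auto simp: L_def length_Suc_conv wtl_Cons)
    then have "card ?S0 = 0" by (metis card.empty)
    with False show ?thesis by simp
  qed
  have "card (L (Suc r) (Suc k) d) = card ?S1 + card ?S0"
    by (subst split, rule card_Un_disjoint) (use fin in auto)
  then show ?thesis using c1 c0 by (simp add: cnt_def)
qed


definition Gp :: "nat \<Rightarrow> nat \<Rightarrow> rat poly" where
  "Gp r k = (\<Sum>d\<le>r*k. monom (of_nat (cnt r k d)) d)"

lemma coeff_Gp: "coeff (Gp r k) d = of_nat (cnt r k d)"
proof -
  have "coeff (Gp r k) d = (\<Sum>j\<le>r*k. if j = d then of_nat (cnt r k j) else 0)"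
    by (simp add: Gp_def coeff_sum)
  also have "\<dots> = (if d \<le> r * k then of_nat (cnt r k d) else 0)"
    by (simp add: sum.delta)
  also have "\<dots> = of_nat (cnt r k d)" using cnt_big[of r k d] by auto
  finally show ?thesis .
qed

lemma Gp_rec: "Gp (Suc r) (Suc k) = Gp (Suc r) k + monom 1 (Suc k) * Gp r (Suc k)"
  by (rule poly_eqI) (simp add: coeff_Gp coeff_monom_mult cnt_rec not_less)

lemma Gp_r0: "Gp 0 k = 1"
  by (rule poly_eqI) (simp add: coeff_Gp cnt_r0 coeff_1)

lemma Gp_k0: "Gp r 0 = 1"
  by (rule poly_eqI) (simp add: coeff_Gp cnt_k0 coeff_1)

abbreviation omq where "omq \<equiv> one_minus_qpow"

definition fac :: "nat \<Rightarrow> rat poly" where "fac k = (\<Prod>i<k. omq (k - i))"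
definition qf :: "nat \<Rightarrow> nat \<Rightarrow> rat poly" where "qf N k = (\<Prod>i<k. omq (N - i))"

lemma fac_Suc: "fac (Suc k) = omq (Suc k) * fac k"
  by (simp add: fac_def prod.lessThan_Suc_shift del: prod.lessThan_Suc)
lemma qf_Suc1: "qf N (Suc k) = omq N * qf (N - 1) k"
  by (simp add: qf_def prod.lessThan_Suc_shift del: prod.lessThan_Suc)
lemma qf_Suc2: "qf N (Suc k) = qf N k * omq (N - k)"
  by (simp add: qf_def)
lemma fac_0[simp]: "fac 0 = 1" by (simp add: fac_def)
lemma qf_0[simp]: "qf N 0 = 1" by (simp add: qf_def)

lemma omq_add: "omq a + monom 1 a * omq b = omq (a + b)"
  by (simp add: one_minus_qpow_def algebra_simps mult_monom)

lemma Gp_fac: "Gp r k * fac k = qf (r + k) k"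
proof (induction k arbitrary: r)
  case 0 then show ?case by (simp add: Gp_k0)
next
  case (Suc k)
  note outer = Suc.IH
  show ?case
  proof (induction r)
    case 0 then show ?case by (simp add: Gp_r0 fac_def qf_def)
  next
    case (Suc r)
    have "Gp (Suc r) (Suc k) * fac (Suc k)
        = (Gp (Suc r) k * fac k) * omq (Suc k) + monom 1 (Suc k) * (Gp r (Suc k) * fac (Suc k))"
      by (simp add: Gp_rec fac_Suc algebra_simps)
    also have "\<dots> = qf (Suc r + k) k * omq (Suc k) + monom 1 (Suc k) * qf (r + Suc k) (Suc k)"
      using Suc.IH outer[of "Suc r"] by simp
    also have "qf (r + Suc k) (Suc k) = qf (Suc r + k) k * omq (Suc r)"
      by (simp add: qf_Suc2)
    also have "qf (Suc r + k) k * omq (Suc k) + monom 1 (Suc k) * (qf (Suc r + k) k * omq (Suc r))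
        = qf (Suc r + k) k * (omq (Suc k) + monom 1 (Suc k) * omq (Suc r))"
      by (simp add: algebra_simps)
    also have "\<dots> = qf (Suc r + Suc k) (Suc k)"
    proof -
      have "omq (Suc k) + monom 1 (Suc k) * omq (Suc r) = omq (Suc r + Suc k)"
        using omq_add[of "Suc k" "Suc r"] by (simp add: add.commute)
      moreover have "qf (Suc r + Suc k) (Suc k) = omq (Suc r + Suc k) * qf (Suc r + k) k"
        using qf_Suc1[of "Suc r + Suc k" k] by simp
      ultimately show ?thesis by (simp add: mult.commute)
    qed
    finally show ?case .
  qed
qed

lemma omq_nonzero: "j \<noteq> 0 \<Longrightarrow> omq j \<noteq> 0"
proof
  assume "j \<noteq> 0" "omq j = 0"
  then have "coeff (omq j) 0 = 0" by simp
  with \<open>j \<noteq> 0\<close> show False by (simp add: one_minus_qpow_def)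
qed

lemma fac_nonzero: "fac k \<noteq> 0"
  unfolding fac_def by (auto simp: prod_zero_iff omq_nonzero)

lemma gauss_eq: "m \<le> n \<Longrightarrow> gauss_poly n m = Gp (n - m) m"
proof -
  assume "m \<le> n"
  then have "qf n m = Gp (n - m) m * fac m" using Gp_fac[of "n - m" m] by simp
  moreover have "gauss_poly n m = qf n m div fac m" by (simp add: gauss_poly_def qf_def fac_def)
  ultimately show ?thesis by (simp add: fac_nonzero)
qed

lemma core_id:
  fixes a b q :: "'a :: comm_ring_1"
  shows "(1 - a*b*b*q*q*q) * (1 - a) = (1 - a*b*q*q) * (1 - a*b*q) - a * ((1 - b*q) * (1 - b*q*q))"
  by (simp add: algebra_simps)

lemma K_eq:
  assumes "m = Suc (Suc m2)" "n = r + m2 + 1" "0 < r"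
  shows "q_kaplansky n m = Gp r m - monom 1 r * Gp r m2"
proof -
  let ?X = "Gp r m - monom 1 r * Gp r m2"
  let ?P = "qf (r + m2) m2"
  have nm: "n - m = r - 1" "m \<le> n" using assms by auto
  have qfn: "qf n m = omq n * ?P * omq r"
  proof -
    have "qf n m = omq n * qf (n - 1) (Suc m2)" using assms(1) qf_Suc1 by simp
    also have "n - 1 = r + m2" using assms by simp
    also have "qf (r + m2) (Suc m2) = ?P * omq r" by (simp add: qf_Suc2)
    finally show ?thesis by (simp add: mult.assoc)
  qed
  have qfn1: "qf (r + m) m = omq (n + 1) * omq n * ?P"
    using assms by (simp add: qf_Suc1 algebra_simps)
  have "Gp (n - m) m * fac m = qf (n - m + m) m"
    using Gp_fac[of "n - m" m] by simp
  also have "n - m + m = n" using nm by simp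
  finally have "Gp (n - m) m * fac m = qf n m" .
  then have L: "omq (n + m) * gauss_poly n m * fac m = omq (n + m) * (omq n * ?P * omq r)"
    by (simp add: gauss_eq[OF nm(2)] qfn mult.assoc)
  have G2: "Gp r m2 * fac m = ?P * omq (Suc m2) * omq (Suc (Suc m2))"
    using Gp_fac[of r m2] assms by (simp add: fac_Suc algebra_simps)
  have Gm: "Gp r m * fac m = omq (n + 1) * omq n * ?P"
    using Gp_fac[of r m] qfn1 by simp
  have R0: "?X * omq n * fac m = (Gp r m * fac m - monom 1 r * (Gp r m2 * fac m)) * omq n"
    by (simp add: algebra_simps)
  have R: "?X * omq n * fac m = (omq (n + 1) * omq n * ?P - monom 1 r * (?P * omq (Suc m2) * omq (Suc (Suc m2)))) * omq n"
    unfolding R0 G2 Gm ..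
  have core: "omq (n + m) * omq r = omq (n + 1) * omq n - monom 1 r * (omq (Suc m2) * omq (Suc (Suc m2)))"
  proof -
    have e1: "monom (1::rat) (n + m) = monom 1 r * monom 1 m2 * monom 1 m2 * monom 1 1 * monom 1 1 * monom 1 1"
      using assms by (simp add: mult_monom)
    have e2: "monom (1::rat) (n + 1) = monom 1 r * monom 1 m2 * monom 1 1 * monom 1 1"
      using assms by (simp add: mult_monom)
    have e3: "monom (1::rat) n = monom 1 r * monom 1 m2 * monom 1 1"
      using assms by (simp add: mult_monom)
    have e4: "monom (1::rat) (Suc m2) = monom 1 m2 * monom 1 1"
      by (simp add: mult_monom)
    have e5: "monom (1::rat) (Suc (Suc m2)) = monom 1 m2 * monom 1 1 * monom 1 1"
      by (simp add: mult_monom)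
    show ?thesis
      unfolding one_minus_qpow_def e1 e2 e3 e4 e5 by (rule core_id)
  qed
  have "omq (n + m) * gauss_poly n m * fac m = ?X * omq n * fac m"
    unfolding L R
  proof -
    have "omq (n + m) * (omq n * ?P * omq r) = (omq (n + m) * omq r) * omq n * ?P"
      by (simp add: algebra_simps)
    also have "\<dots> = (omq (n + 1) * omq n - monom 1 r * (omq (Suc m2) * omq (Suc (Suc m2)))) * omq n * ?P"
      by (simp add: core)
    also have "\<dots> = (omq (n + 1) * omq n * ?P - monom 1 r * (?P * omq (Suc m2) * omq (Suc (Suc m2)))) * omq n"
      by (simp add: algebra_simps)
    finally show "omq (n + m) * (omq n * ?P * omq r) = (omq (n + 1) * omq n * ?P - monom 1 r * (?P * omq (Suc m2) * omq (Suc (Suc m2)))) * omq n" .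
  qed
  then have "omq (n + m) * gauss_poly n m = ?X * omq n"
    using fac_nonzero[of m] by simp
  moreover have "omq n \<noteq> 0" using assms by (simp add: omq_nonzero)
  ultimately show ?thesis by (simp add: q_kaplansky_def)
qed

lemma coeff_K:
  assumes "m = Suc (Suc m2)" "n = r + m2 + 1" "0 < r"
  shows "coeff (q_kaplansky n m) d = of_nat (cnt r m d) - (if r \<le> d then of_nat (cnt r m2 (d - r)) else 0)"
  by (simp add: K_eq[OF assms] coeff_monom_mult coeff_Gp not_less)


lemma MonQ_eq: "MonQ r k d = (if r \<le> d then Mon r k (d - r) else {})"
  by (auto simp: MonQ_def Mon_def)

lemma card_MonQ: "card (MonQ r k d) = (if r \<le> d then cnt r k (d - r) else 0)"
  by (simp add: MonQ_eq card_Mon cnt_def)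

lemma coeff_K':
  assumes "m = Suc (Suc m2)" "n = r + m2 + 1" "0 < r"
  shows "coeff (q_kaplansky n m) d = of_nat (card (Mon r m d)) - of_nat (card (MonQ r m2 d))"
  using coeff_K[OF assms] by (simp add: card_MonQ card_Mon cnt_def)

theorem theorem1p5:
  fixes n m :: nat
  assumes "2 \<le> m" and "m \<le> n" and "odd (n - m)"
  defines "D \<equiv> m * (n - m) + m"
  shows "(\<forall>i\<le>D. coeff (q_kaplansky n m) i = coeff (q_kaplansky n m) (D - i))
       \<and> (\<forall>i j. i \<le> j \<and> j \<le> D div 2 \<longrightarrow> coeff (q_kaplansky n m) i \<le> coeff (q_kaplansky n m) j)
       \<and> (\<forall>i j. D div 2 \<le> i \<and> i \<le> j \<and> j \<le> D \<longrightarrow> coeff (q_kaplansky n m) j \<le> coeff (q_kaplansky n m) i)"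
proof -
  define r where "r = n - m + 1"
  define m2 where "m2 = m - 2"
  have m: "m = Suc (Suc m2)" using assms(1) by (simp add: m2_def)
  have n: "n = r + m2 + 1" using assms(1,2) by (simp add: r_def m2_def)
  have r0: "0 < r" by (simp add: r_def)
  have re: "even r" using assms(3) by (simp add: r_def)
  have D: "D = r * m" using assms(2) by (simp add: D_def r_def algebra_simps)
  have De: "even D" using re D by simp
  define t where "t = r * m2"
  have DD: "D = t + 2 * r" using D m by (simp add: algebra_simps t_def)
  let ?c = "\<lambda>d. coeff (q_kaplansky n m) d"
  have c: "?c d = of_nat (cnt r m d) - (if r \<le> d then of_nat (cnt r m2 (d - r)) else 0)" for d
    using coeff_K[OF m n r0] .
  have c': "?c d = of_nat (card (Mon r m d)) - of_nat (card (MonQ r m2 d))" for d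
    using coeff_K'[OF m n r0] .
  have sym: "?c i = ?c (D - i)" if i: "i \<le> D" for i
  proof -
    have a: "cnt r m i = cnt r m (D - i)" using cnt_sym[of i r m] i D by simp
    have b: "(if r \<le> i then cnt r m2 (i - r) else 0) = (if r \<le> D - i then cnt r m2 (D - i - r) else 0)"
    proof (cases "r \<le> i")
      case True
      show ?thesis
      proof (cases "r \<le> D - i")
        case True2: True
        have "i - r \<le> t" using True2 DD r0 i by arith
        then have "cnt r m2 (i - r) = cnt r m2 (t - (i - r))" unfolding t_def by (rule cnt_sym)
        moreover have "t - (i - r) = D - i - r" using True True2 DD i by arith
        ultimately show ?thesis using True True2 by simp
      next
        case False
        have "t < i - r" using False True DD i by arith
        then show ?thesis using True False by (simp add: cnt_big t_def)
      qed
    next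
      case False
      have "r \<le> D - i" using False DD i by arith
      moreover have "t < D - i - r" using False DD i by arith
      ultimately show ?thesis using False by (simp add: cnt_big t_def)
    qed
    have "?c i = of_nat (cnt r m i) - of_nat (if r \<le> i then cnt r m2 (i - r) else 0)"
      using c[of i] by simp
    also have "\<dots> = of_nat (cnt r m (D - i)) - of_nat (if r \<le> D - i then cnt r m2 (D - i - r) else 0)"
      using a b by simp
    also have "\<dots> = ?c (D - i)" using c[of "D - i"] by simp
    finally show ?thesis .
  qed
  have step: "?c d \<le> ?c (Suc d)" if "2 * d < D" for d
  proof -
    have "card (Mon r m d) + card (MonQ r (m-2) (Suc d)) \<le> card (Mon r m (Suc d)) + card (MonQ r (m-2) d)"
      using sl2_count[OF re _ assms(1)] r0 that D by simp
    then have "of_nat (card (Mon r m d)) + of_nat (card (MonQ r m2 (Suc d))) \<le>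
               (of_nat (card (Mon r m (Suc d))) + of_nat (card (MonQ r m2 d)) :: rat)"
      unfolding m2_def by (metis of_nat_add of_nat_le_iff)
    then show ?thesis unfolding c' by simp
  qed
  have mono: "?c i \<le> ?c j" if "i \<le> j" "j \<le> D div 2" for i j
    using that
  proof (induction j)
    case 0 then show ?case by simp
  next
    case (Suc j)
    show ?case
    proof (cases "i = Suc j")
      case True then show ?thesis by simp
    next
      case False
      then have "?c i \<le> ?c j" using Suc by simp
      also have "?c j \<le> ?c (Suc j)" using step[of j] Suc(3) De by auto
      finally show ?thesis .
    qed
  qed
  have anti: "?c j \<le> ?c i" if "D div 2 \<le> i" "i \<le> j" "j \<le> D" for i j
  proof -
    have "?c (D - j) \<le> ?c (D - i)" using mono[of "D - j" "D - i"] that De by auto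
    then show ?thesis using sym[of i] sym[of j] that by simp
  qed
  show ?thesis using sym mono anti by blast
qed


end
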